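(* Let $q>1$ and let $\Pi,\Pi'\sim\mathrm{Mallows}(\mathbb{N},1/q)$ be independent. Define $T_1:=\inf\{j\ge1:\Pi([j])=\Pi'([j])=[j]\}$, where $[j]=\{1,\dots,j\}$. Then $\mathbb{E}\,T_1^2<\infty$.
   Context: For $0<p<1$, $\Pi\sim\mathrm{Mallows}(\mathbb{N},p)$ is the random injection $\mathbb{N}\to\mathbb{N}$ constructed as follows: let $Z_1,Z_2,\dots$ be i.i.d. geometric with $\mathbb{P}(Z_i=k)=(1-p)p^{k-1}$, $k\ge1$; set $\Pi(1)=Z_1$ and, for $i>1$, let $\Pi(i)$ be the $Z_i$-th smallest element of $\mathbb{N}\setminus\{\Pi(1),\dots,\Pi(i-1)\}$. *)

theory Defs
  imports "HOL-Probability.Probability"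
begin

text \<open>Law of a single Z_i: P(Z = k) = (1-p) p^(k-1) for k \<ge> 1
  (the library geometric_pmf r has pmf n = (1-r)^n r on n \<ge> 0).\<close>
definition mallows_Z_pmf :: "real \<Rightarrow> nat pmf" where
  "mallows_Z_pmf p = map_pmf Suc (geometric_pmf (1 - p))"

text \<open>Given z (only z 1, z 2, ... are used), the list [Pi(1), ..., Pi(n)]:
  Pi(i) is the z(i)-th smallest element of {1,2,...} minus {Pi(1),...,Pi(i-1)}.
  enumerate S k is the (k+1)-th smallest element of the infinite set S.\<close>
fun mallows_prefix :: "(nat \<Rightarrow> nat) \<Rightarrow> nat \<Rightarrow> nat list" where
  "mallows_prefix z 0 = []"
| "mallows_prefix z (Suc n) =
     (let xs = mallows_prefix z n
      in xs @ [enumerate ({1..} - set xs) (z (Suc n) - 1)])"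

text \<open>The injection Pi : {1,2,...} \<rightarrow> {1,2,...} (value at 0 is irrelevant).\<close>
definition mallows_map :: "(nat \<Rightarrow> nat) \<Rightarrow> nat \<Rightarrow> nat" where
  "mallows_map z i = last (mallows_prefix z i)"

text \<open>Mallows(N,p) is the law of mallows_map z where z has i.i.d. coordinates
  with law mallows_Z_pmf p; we work on the sequence space directly.\<close>
definition mallows_seq_space :: "real \<Rightarrow> (nat \<Rightarrow> nat) measure" where
  "mallows_seq_space p = PiM UNIV (\<lambda>_::nat. measure_pmf (mallows_Z_pmf p))"

definition first_joint_block :: "(nat \<Rightarrow> nat) \<Rightarrow> (nat \<Rightarrow> nat) \<Rightarrow> ennreal" where
  "first_joint_block \<pi> \<pi>' =
     (if \<exists>j\<ge>1. \<pi> ` {1..j} = {1..j} \<and> \<pi>' ` {1..j} = {1..j}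
      then of_nat (LEAST j. j \<ge> 1 \<and> \<pi> ` {1..j} = {1..j} \<and> \<pi>' ` {1..j} = {1..j})
      else \<infinity>)"

end

theory Submission
  imports Defs
begin


lemma enumerate_le_count:
  fixes S :: "nat set"
  assumes inf: "infinite S" and c: "k < card (S \<inter> {..M})"
  shows "enumerate S k \<le> M"
proof (rule ccontr)
  assume "\<not> enumerate S k \<le> M"
  hence gt: "M < enumerate S k" by simp
  have "S \<inter> {..M} \<subseteq> enumerate S ` {..<k}"
  proof
    fix s assume s: "s \<in> S \<inter> {..M}"
    then obtain i where i: "s = enumerate S i" using range_enumerate[OF inf] by blast
    have "i < k"
    proof (rule ccontr)
      assume "\<not> i < k" hence "k \<le> i" by simp
      hence "enumerate S k \<le> enumerate S i" using inf by simp
      thus False using s i gt by auto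
    qed
    thus "s \<in> enumerate S ` {..<k}" using i by auto
  qed
  hence "card (S \<inter> {..M}) \<le> card (enumerate S ` {..<k})" by (intro card_mono) auto
  also have "\<dots> \<le> k" using card_image_le[of "{..<k}" "enumerate S"] by simp
  finally show False using c by simp
qed

lemma enumerate_bound:
  fixes A :: "nat set"
  assumes A: "A \<subseteq> {1..N}" "card A = n"
  shows "enumerate ({1..} - A) k \<le> max N (n + k + 1)"
proof (rule enumerate_le_count)
  have fA: "finite A" using A finite_subset by blast
  show "infinite ({1..} - A)" using fA by (simp add: infinite_Ici)
  let ?M = "max N (n + k + 1)"
  have "({1..} - A) \<inter> {..?M} = {1..?M} - A" by auto
  moreover have AM: "A \<subseteq> {1..?M}"
  proof
    fix x assume "x \<in> A"
    hence "x \<in> {1..N}" using A(1) by blast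
    thus "x \<in> {1..?M}" by (simp add: le_max_iff_disj)
  qed
  moreover have "card ({1..?M} - A) = ?M - n"
    using A fA AM by (subst card_Diff_subset) auto
  ultimately show "k < card (({1..} - A) \<inter> {..?M})" by simp
qed

fun eseq :: "(nat \<Rightarrow> nat) \<Rightarrow> nat \<Rightarrow> nat" where
  "eseq z 0 = 0"
| "eseq z (Suc n) = max (eseq z n - 1) (z (Suc n) - 1)"

lemma prefix_inv:
  "length (mallows_prefix z n) = n \<and> distinct (mallows_prefix z n) \<and>
   set (mallows_prefix z n) \<subseteq> {1..n + eseq z n}"
proof (induction n)
  case 0 thus ?case by simp
next
  case (Suc n)
  let ?xs = "mallows_prefix z n"
  let ?y = "enumerate ({1..} - set ?xs) (z (Suc n) - 1)"
  have inf: "infinite ({1..} - set ?xs)" by (simp add: infinite_Ici)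
  have yin: "?y \<in> {1..} - set ?xs" by (rule enumerate_in_set[OF inf])
  have card: "card (set ?xs) = n" using Suc.IH by (simp add: distinct_card)
  have y1: "?y \<le> max (n + eseq z n) (n + (z (Suc n) - 1) + 1)"
    by (rule enumerate_bound[OF conjunct2[OF conjunct2[OF Suc.IH]] card])
  have aux: "\<And>(e::nat) k. max (n + e) (n + k + 1) \<le> Suc n + max (e - 1) k"
    by (case_tac e) (auto simp: max_def)
  have yb: "?y \<le> Suc n + eseq z (Suc n)"
    unfolding eseq.simps by (rule order_trans[OF y1 aux])
  have aux2: "\<And>(e::nat) k. n + e \<le> Suc n + max (e - 1) k"
    by (case_tac e) (auto simp: max_def)
  have le: "n + eseq z n \<le> Suc n + eseq z (Suc n)"
    unfolding eseq.simps by (rule aux2)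
  have "set ?xs \<subseteq> {1..Suc n + eseq z (Suc n)}"
  proof
    fix x assume "x \<in> set ?xs"
    hence "x \<in> {1..n + eseq z n}" using Suc.IH by blast
    thus "x \<in> {1..Suc n + eseq z (Suc n)}" using le by simp
  qed
  moreover have "?y \<in> {1..Suc n + eseq z (Suc n)}" using yin yb by simp
  ultimately have sub: "set ?xs \<union> {?y} \<subseteq> {1..Suc n + eseq z (Suc n)}" by blast
  have eq: "mallows_prefix z (Suc n) = ?xs @ [?y]" by (simp add: Let_def)
  have "?y \<notin> set ?xs" using yin by blast
  hence "distinct (?xs @ [?y])" using Suc.IH by simp
  moreover have "length (?xs @ [?y]) = Suc n" using Suc.IH by simp
  moreover have "set (?xs @ [?y]) \<subseteq> {1..Suc n + eseq z (Suc n)}" using sub by simp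
  ultimately show ?case unfolding eq by blast
qed

lemma map_image: "mallows_map z ` {1..j} = set (mallows_prefix z j)"
proof (induction j)
  case 0 thus ?case by simp
next
  case (Suc j)
  have "{1..Suc j} = insert (Suc j) {1..j}" by auto
  moreover have "mallows_map z ` {1..j} = set (mallows_prefix z j)" using Suc .
  moreover have "\<forall>i\<in>{1..j}. mallows_map z i = mallows_map z i" by simp
  ultimately show ?case by (auto simp: mallows_map_def Let_def)
qed

definition good :: "nat \<Rightarrow> (nat \<Rightarrow> nat) \<Rightarrow> bool" where
  "good j z \<longleftrightarrow> (\<forall>i\<in>{1..j}. z i \<le> j - i + 1)"

lemma eseq_bound: "good j z \<Longrightarrow> n \<le> j \<Longrightarrow> eseq z n \<le> j - n"
proof (induction n)
  case 0 thus ?case by simp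
next
  case (Suc n)
  have a: "z (Suc n) \<le> j - Suc n + 1" using Suc.prems unfolding good_def by auto
  have b: "eseq z n \<le> j - n" using Suc by simp
  have c: "Suc n \<le> j" using Suc by simp
  have "eseq z n - 1 \<le> j - Suc n" using b c by linarith
  moreover have "z (Suc n) - 1 \<le> j - Suc n" using a c by linarith
  ultimately show ?case by simp
qed

lemma good_block: assumes "good j z" shows "mallows_map z ` {1..j} = {1..j}"
proof -
  have "eseq z j = 0" using eseq_bound[OF assms, of j] by simp
  hence sub: "set (mallows_prefix z j) \<subseteq> {1..j}" using prefix_inv[of z j] by simp
  have "card (set (mallows_prefix z j)) = j" using prefix_inv[of z j] by (simp add: distinct_card)
  hence "set (mallows_prefix z j) = {1..j}" using sub by (intro card_subset_eq) simp_all
  thus ?thesis by (simp only: map_image)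
qed

lemma fjb_le:
  assumes "good j z" "good j z'" "j \<ge> 1"
  shows "first_joint_block (mallows_map z) (mallows_map z') \<le> of_nat j"
proof -
  have P: "j \<ge> 1 \<and> mallows_map z ` {1..j} = {1..j} \<and> mallows_map z' ` {1..j} = {1..j}"
    using assms good_block by blast
  hence L: "(LEAST j. j \<ge> 1 \<and> mallows_map z ` {1..j} = {1..j} \<and> mallows_map z' ` {1..j} = {1..j}) \<le> j"
    by (rule Least_le)
  have ex: "\<exists>j\<ge>1. mallows_map z ` {1..j} = {1..j} \<and> mallows_map z' ` {1..j} = {1..j}"
    using P by blast
  have "first_joint_block (mallows_map z) (mallows_map z')
     = of_nat (LEAST j. j \<ge> 1 \<and> mallows_map z ` {1..j} = {1..j} \<and> mallows_map z' ` {1..j} = {1..j})"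
    unfolding first_joint_block_def using ex by (rule if_P)
  also have "\<dots> \<le> of_nat j" using L by (rule of_nat_mono)
  finally show ?thesis .
qed



lemma coord_indep:
  fixes M0 :: "'a measure"
  assumes "prob_space M0"
  shows "prob_space.indep_vars (PiM UNIV (\<lambda>_::nat. M0)) (\<lambda>_. M0) (\<lambda>i \<omega>. \<omega> i) UNIV"
proof -
  interpret P: product_prob_space "\<lambda>_::nat. M0" "UNIV::nat set"
    using assms by (simp add: product_prob_space_def product_prob_space_axioms_def
        product_sigma_finite_def prob_space_imp_sigma_finite)
  show ?thesis
  proof (subst P.indep_vars_iff_distr_eq_PiM, simp, rule measurable_component_singleton, simp)
    have r: "\<And>x::nat \<Rightarrow> 'a. restrict x UNIV = x" by (auto simp: restrict_def)
    have "distr (PiM UNIV (\<lambda>_. M0)) (PiM UNIV (\<lambda>_. M0)) (\<lambda>x. \<lambda>i\<in>UNIV. x i) = PiM UNIV (\<lambda>_. M0)"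
      by (rule trans[OF distr_cong[OF refl refl, of _ _ "\<lambda>x. x"]]) (auto simp: restrict_def)
    also have "\<dots> = PiM UNIV (\<lambda>i. distr (PiM UNIV (\<lambda>_. M0)) M0 (\<lambda>x::nat\<Rightarrow>'a. x i))"
      using distr_PiM_component[of "UNIV::nat set" "\<lambda>_. M0"] assms by (intro PiM_cong) (auto intro: sym)
    finally show "distr (PiM UNIV (\<lambda>_. M0)) (PiM UNIV (\<lambda>_. M0)) (\<lambda>x. \<lambda>i\<in>UNIV. x i) =
        PiM UNIV (\<lambda>i. distr (PiM UNIV (\<lambda>_. M0)) M0 (\<lambda>x::nat\<Rightarrow>'a. x i))" .
  qed
qed

lemma block_indep:
  fixes M0 :: "'a measure" and J :: "'k \<Rightarrow> nat set" and f :: "'k \<Rightarrow> (nat \<Rightarrow> 'a) \<Rightarrow> ennreal"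
  assumes M0: "prob_space M0" and K: "finite K" and dis: "disjoint_family_on J K"
  and meas: "\<And>k. k \<in> K \<Longrightarrow> f k \<in> borel_measurable (PiM (J k) (\<lambda>_. M0))"
  shows "(\<integral>\<^sup>+\<omega>. (\<Prod>k\<in>K. f k (restrict \<omega> (J k))) \<partial>PiM UNIV (\<lambda>_. M0))
       = (\<Prod>k\<in>K. \<integral>\<^sup>+\<omega>. f k (restrict \<omega> (J k)) \<partial>PiM UNIV (\<lambda>_. M0))"
proof -
  interpret P: product_prob_space "\<lambda>_::nat. M0" "UNIV::nat set"
    using M0 by (simp add: product_prob_space_def product_prob_space_axioms_def
        product_sigma_finite_def prob_space_imp_sigma_finite)
  have i1: "P.indep_vars (\<lambda>k. PiM (J k) (\<lambda>_. M0)) (\<lambda>k \<omega>. restrict (\<lambda>i. \<omega> i) (J k)) K"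
    by (rule P.indep_vars_restrict[OF coord_indep[OF M0] _ dis]) auto
  have i2: "P.indep_vars (\<lambda>_. borel) (\<lambda>k \<omega>. f k (restrict (\<lambda>i. \<omega> i) (J k))) K"
    by (rule P.indep_vars_compose2[OF i1 meas])
  show ?thesis
    using P.indep_vars_nn_integral[OF K i2] by simp
qed



lemma Zle:
  assumes p: "0 < p" "p < 1"
  shows "measure (mallows_Z_pmf p) {..b} = 1 - p^b"
proof -
  have "Suc -` {..b} = {..<b}" by auto
  hence "measure (mallows_Z_pmf p) {..b} = measure (geometric_pmf (1-p)) {..<b}"
    by (simp add: mallows_Z_pmf_def)
  also have "\<dots> = (\<Sum>g<b. pmf (geometric_pmf (1-p)) g)"
    by (simp add: measure_measure_pmf_finite)
  also have "\<dots> = (\<Sum>g<b. p^g * (1-p))"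
    using p by (intro sum.cong) (auto simp: pmf_geometric)
  also have "\<dots> = (1-p) * (\<Sum>g<b. p^g)" by (simp add: sum_distrib_left mult.commute)
  also have "\<dots> = 1 - p^b" using p by (simp add: sum_gp_strict)
  finally show ?thesis .
qed

lemma Zgt:
  assumes p: "0 < p" "p < 1"
  shows "measure (mallows_Z_pmf p) {m<..} = p^m"
proof -
  have "{m<..} = space (measure_pmf (mallows_Z_pmf p)) - {..m}" by auto
  hence "measure (mallows_Z_pmf p) {m<..} = 1 - measure (mallows_Z_pmf p) {..m}"
    using measure_pmf.prob_compl[of "{..m}" "mallows_Z_pmf p"] by simp
  thus ?thesis using Zle[OF p] by simp
qed

lemma space_S: "space (PiM UNIV (\<lambda>_::nat. measure_pmf q)) = UNIV"
  by (simp add: space_PiM)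

lemma S_Collect:
  assumes "Measurable.pred (PiM UNIV (\<lambda>_::nat. measure_pmf q)) P"
  shows "{z. P z} \<in> sets (PiM UNIV (\<lambda>_::nat. measure_pmf q))"
proof -
  have "{z\<in>space (PiM UNIV (\<lambda>_::nat. measure_pmf q)). P z} \<in> sets (PiM UNIV (\<lambda>_::nat. measure_pmf q))"
    using assms by measurable
  thus ?thesis by (simp add: space_S)
qed

lemma box_measure:
  assumes p: "0 < p" "p < 1" and J: "finite J"
  shows "emeasure (mallows_seq_space p) {z. \<forall>i\<in>J. z i \<le> b i} = ennreal (\<Prod>i\<in>J. 1 - p ^ b i)"
proof -
  interpret P: product_prob_space "\<lambda>_::nat. measure_pmf (mallows_Z_pmf p)" "UNIV::nat set"
    by (simp add: product_prob_space_def product_prob_space_axioms_def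
        product_sigma_finite_def prob_space_imp_sigma_finite prob_space_measure_pmf)
  have "emeasure (mallows_seq_space p) {z. \<forall>i\<in>J. z i \<le> b i}
     = emeasure (PiM UNIV (\<lambda>_. measure_pmf (mallows_Z_pmf p)))
         {x\<in>space (PiM UNIV (\<lambda>_. measure_pmf (mallows_Z_pmf p))). \<forall>i\<in>J. x i \<in> {..b i}}"
    by (simp add: mallows_seq_space_def space_S)
  also have "\<dots> = (\<Prod>i\<in>J. emeasure (measure_pmf (mallows_Z_pmf p)) {..b i})"
    using J by (intro P.emeasure_PiM_Collect) auto
  also have "\<dots> = (\<Prod>i\<in>J. ennreal (1 - p ^ b i))"
    using Zle[OF p] by (simp add: measure_pmf.emeasure_eq_measure)
  also have "\<dots> = ennreal (\<Prod>i\<in>J. 1 - p ^ b i)"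
    using p by (intro prod_ennreal) (simp add: power_le_one)
  finally show ?thesis .
qed

lemma tail_measure:
  assumes p: "0 < p" "p < 1"
  shows "emeasure (mallows_seq_space p) {z. (m::nat) < z i} = ennreal (p^m)"
proof -
  interpret P: product_prob_space "\<lambda>_::nat. measure_pmf (mallows_Z_pmf p)" "UNIV::nat set"
    by (simp add: product_prob_space_def product_prob_space_axioms_def
        product_sigma_finite_def prob_space_imp_sigma_finite prob_space_measure_pmf)
  have "emeasure (mallows_seq_space p) {z. m < z i}
     = emeasure (PiM UNIV (\<lambda>_. measure_pmf (mallows_Z_pmf p)))
         {x\<in>space (PiM UNIV (\<lambda>_. measure_pmf (mallows_Z_pmf p))). x i \<in> {m<..}}"
    by (simp add: mallows_seq_space_def space_S)
  also have "\<dots> = emeasure (measure_pmf (mallows_Z_pmf p)) {m<..}"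
    by (intro P.emeasure_PiM_Collect_single) auto
  also have "\<dots> = ennreal (p^m)"
    using Zgt[OF p] by (simp add: measure_pmf.emeasure_eq_measure)
  finally show ?thesis .
qed

lemma B_measure:
  assumes p: "0 < p" "p < 1"
  shows "emeasure (mallows_seq_space p) {z. \<exists>i\<in>{1..m^2}. (m::nat) < z i} \<le> of_nat (m^2) * ennreal (p^m)"
proof -
  have "{z. \<exists>i\<in>{1..m^2}. (m::nat) < z i} = (\<Union>i\<in>{1..m^2}. {z. m < z i})" by auto
  hence "emeasure (mallows_seq_space p) {z. \<exists>i\<in>{1..m^2}. (m::nat) < z i}
      \<le> (\<Sum>i\<in>{1..m^2}. emeasure (mallows_seq_space p) {z. m < z i})"
    by (simp only:) (intro emeasure_subadditive_finite, auto simp: mallows_seq_space_def intro!: S_Collect)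
  also have "\<dots> = of_nat (m^2) * ennreal (p^m)" using tail_measure[OF p] by simp
  finally show ?thesis .
qed



lemma prob_S: "prob_space (mallows_seq_space p)"
  unfolding mallows_seq_space_def by (intro prob_space_PiM prob_space_measure_pmf)

lemma box_int:
  assumes p: "0 < p" "p < 1" and J: "finite J" and a: "a \<ge> 0"
  shows "(\<integral>\<^sup>+z. (if \<forall>i\<in>J. z i \<le> b i then ennreal a else 1) \<partial>mallows_seq_space p)
       = ennreal (a * (\<Prod>i\<in>J. 1 - p ^ b i) + (1 - (\<Prod>i\<in>J. 1 - p ^ b i)))"
proof -
  interpret S: prob_space "mallows_seq_space p" by (rule prob_S)
  let ?E = "{z. \<forall>i\<in>J. z i \<le> b i}"
  let ?P = "\<Prod>i\<in>J. 1 - p ^ b i"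
  have sp: "space (mallows_seq_space p) = UNIV" by (simp add: mallows_seq_space_def space_S)
  have Es: "?E \<in> sets (mallows_seq_space p)"
    unfolding mallows_seq_space_def using J by (intro S_Collect) measurable
  have P0: "0 \<le> ?P" using p by (intro prod_nonneg) (simp add: power_le_one)
  have P1: "?P \<le> 1" using p by (intro prod_le_1) (auto simp: power_le_one)
  have mE: "S.prob ?E = ?P"
    using box_measure[OF p J, of b] P0 by (simp add: S.emeasure_eq_measure)
  have mC: "S.prob (UNIV - ?E) = 1 - ?P"
    using S.prob_compl[OF Es] mE sp by simp
  have "(\<lambda>z. if \<forall>i\<in>J. z i \<le> b i then ennreal a else 1)
      = (\<lambda>z. ennreal a * indicator ?E z + indicator (UNIV - ?E) z)"
    by (auto simp: fun_eq_iff indicator_def)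
  hence "(\<integral>\<^sup>+z. (if \<forall>i\<in>J. z i \<le> b i then ennreal a else 1) \<partial>mallows_seq_space p)
      = (\<integral>\<^sup>+z. ennreal a * indicator ?E z + indicator (UNIV - ?E) z \<partial>mallows_seq_space p)"
    by simp
  also have "\<dots> = ennreal a * emeasure (mallows_seq_space p) ?E + emeasure (mallows_seq_space p) (UNIV - ?E)"
    using Es sp sets.compl_sets[OF Es] by (subst nn_integral_add) (auto simp: nn_integral_cmult_indicator)
  also have "\<dots> = ennreal a * ennreal ?P + ennreal (1 - ?P)"
    using mE mC by (simp add: S.emeasure_eq_measure)
  also have "\<dots> = ennreal (a * ?P + (1 - ?P))"
    using a P0 P1 by (simp add: ennreal_mult ennreal_plus)
  finally show ?thesis .
qed

lemma block_box_prod: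
  assumes p: "0 < p" "p < 1" and K: "finite K" and dis: "disjoint_family_on J K"
    and J: "\<And>k. k \<in> K \<Longrightarrow> finite (J k)" and a: "\<And>k. k \<in> K \<Longrightarrow> a k \<ge> 0"
  shows "(\<integral>\<^sup>+z. (\<Prod>k\<in>K. if \<forall>i\<in>J k. z i \<le> b k i then ennreal (a k) else 1) \<partial>mallows_seq_space p)
       = (\<Prod>k\<in>K. ennreal (a k * (\<Prod>i\<in>J k. 1 - p ^ b k i) + (1 - (\<Prod>i\<in>J k. 1 - p ^ b k i))))"
proof -
  define f where "f k x = (if \<forall>i\<in>J k. x i \<le> b k i then ennreal (a k) else 1)" for k and x :: "nat \<Rightarrow> nat"
  have fr: "f k (restrict z (J k)) = (if \<forall>i\<in>J k. z i \<le> b k i then ennreal (a k) else 1)" for k z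
    by (simp add: f_def)
  have meas: "f k \<in> borel_measurable (PiM (J k) (\<lambda>_. measure_pmf (mallows_Z_pmf p)))" if "k \<in> K" for k
    using J[OF that] unfolding f_def by measurable
  have "(\<integral>\<^sup>+z. (\<Prod>k\<in>K. f k (restrict z (J k))) \<partial>mallows_seq_space p)
      = (\<Prod>k\<in>K. \<integral>\<^sup>+z. f k (restrict z (J k)) \<partial>mallows_seq_space p)"
    unfolding mallows_seq_space_def
    by (rule block_indep[OF prob_space_measure_pmf K dis meas])
  also have "\<dots> = (\<Prod>k\<in>K. ennreal (a k * (\<Prod>i\<in>J k. 1 - p ^ b k i) + (1 - (\<Prod>i\<in>J k. 1 - p ^ b k i))))"
    using box_int[OF p J a] by (intro prod.cong refl) (simp add: fr)
  finally show ?thesis by (simp add: fr)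
qed



lemma poly_geo:
  fixes \<rho> :: real
  assumes r: "0 \<le> \<rho>" "\<rho> < 1"
  shows "summable (\<lambda>n::nat. real (Suc n) ^ k * \<rho> ^ n)"
proof (cases "k = 0")
  case True thus ?thesis using r by simp
next
  case False
  define \<tau> where "\<tau> = root (2*k) \<rho>"
  have kpos: "0 < 2*k" using False by simp
  have t0: "0 \<le> \<tau>" unfolding \<tau>_def using r by (simp add: real_root_ge_zero)
  have tpow: "\<tau> ^ (2*k) = \<rho>" unfolding \<tau>_def using r kpos by (simp add: real_root_pow_pos2)
  have t1: "\<tau> < 1" unfolding \<tau>_def using r kpos by simp
  have lim1: "(\<lambda>n. of_nat n * \<tau> ^ n) \<longlonglongrightarrow> 0"
    using powser_times_n_limit_0[of \<tau>] t0 t1 by simp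
  have lim2: "(\<lambda>n. \<tau> ^ n) \<longlonglongrightarrow> 0" using t0 t1 by (intro LIMSEQ_power_zero) simp
  have "(\<lambda>n. real (Suc n) * \<tau> ^ n) \<longlonglongrightarrow> 0 + 0"
  proof -
    have "(\<lambda>n. of_nat n * \<tau> ^ n + \<tau> ^ n) \<longlonglongrightarrow> 0 + 0" by (intro tendsto_add lim1 lim2)
    thus ?thesis by (simp add: algebra_simps)
  qed
  hence L: "(\<lambda>n. real (Suc n) * \<tau> ^ n) \<longlonglongrightarrow> 0" by simp
  have z: "(0::real) ^ k = 0" using False by simp
  have "(\<lambda>n. (real (Suc n) * \<tau> ^ n) ^ k) \<longlonglongrightarrow> 0" using tendsto_power[OF L, of k] unfolding z .
  hence ev: "eventually (\<lambda>n. (real (Suc n) * \<tau> ^ n) ^ k < 1) sequentially"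
    by (rule order_tendstoD(2)) simp
  have eq: "real (Suc n) ^ k * \<rho> ^ n = (real (Suc n) * \<tau> ^ n) ^ k * (\<tau> ^ k) ^ n" for n
  proof -
    have "\<rho> ^ n = \<tau> ^ (2*k*n)" using tpow by (simp add: power_mult)
    also have "\<dots> = \<tau> ^ (k*n + k*n)" by (rule arg_cong[where f="\<lambda>e. \<tau> ^ e"]) simp
    also have "\<dots> = (\<tau> ^ n) ^ k * (\<tau> ^ k) ^ n" by (simp add: power_mult[symmetric] power_add mult.commute)
    finally show ?thesis by (simp add: power_mult_distrib)
  qed
  show ?thesis
  proof (rule summable_comparison_test_ev)
    show "summable (\<lambda>n. (\<tau> ^ k) ^ n)" using t0 t1 False
      by (intro summable_geometric) (simp add: power_less_one_iff abs_of_nonneg)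
    show "eventually (\<lambda>n. norm (real (Suc n) ^ k * \<rho> ^ n) \<le> (\<tau> ^ k) ^ n) sequentially"
      using ev
    proof eventually_elim
      case (elim n)
      have "norm (real (Suc n) ^ k * \<rho> ^ n) = (real (Suc n) * \<tau> ^ n) ^ k * (\<tau> ^ k) ^ n"
        using eq[of n] r t0 by simp
      also have "\<dots> \<le> 1 * (\<tau> ^ k) ^ n" using elim t0 by (intro mult_right_mono) auto
      finally show ?case by simp
    qed
  qed
qed

lemma factor_lb:
  fixes p x :: real
  assumes "0 \<le> x" "x \<le> p" "p < 1"
  shows "exp (- x / (1 - p)) \<le> 1 - x"
proof -
  define y where "y = x / (1 - x)"
  have x1: "x < 1" using assms by simp
  have y0: "0 \<le> y" unfolding y_def using assms x1 by simp
  have "x / (1 - x) \<le> x / (1 - p)" using assms x1 by (intro divide_left_mono) auto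
  hence "exp (- x / (1 - p)) \<le> exp (- y)" unfolding y_def by simp
  also have "exp (- y) = 1 / exp y" by (simp add: exp_minus field_simps)
  also have "\<dots> \<le> 1 / (1 + y)" using y0 exp_ge_add_one_self[of y]
    by (intro divide_left_mono) auto
  also have "1 / (1 + y) = 1 - x" unfolding y_def using x1 by (simp add: field_simps)
  finally show ?thesis .
qed

lemma prod_lb:
  fixes p :: real and b :: "nat \<Rightarrow> nat"
  assumes p: "0 < p" "p < 1" and J: "finite J" and inj: "inj_on b J" and b1: "\<And>i. i \<in> J \<Longrightarrow> b i \<ge> 1"
  shows "exp (- 1 / (1 - p)^2) \<le> (\<Prod>i\<in>J. 1 - p ^ b i)"
proof -
  have sumb: "(\<Sum>i\<in>J. p ^ b i) \<le> 1 / (1 - p)"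
  proof -
    obtain N where N: "b ` J \<subseteq> {..<N}"
      using J by (metis finite_imageI finite_nat_iff_bounded)
    have "(\<Sum>i\<in>J. p ^ b i) = (\<Sum>s\<in>b ` J. p ^ s)" using inj by (simp add: sum.reindex)
    also have "\<dots> \<le> (\<Sum>s<N. p ^ s)" using N p by (intro sum_mono2) auto
    also have "\<dots> = (1 - p ^ N) / (1 - p)" using p by (simp add: sum_gp_strict)
    also have "\<dots> \<le> 1 / (1 - p)" using p by (intro divide_right_mono) auto
    finally show ?thesis .
  qed
  have "exp (- 1 / (1 - p)^2) \<le> exp (- (\<Sum>i\<in>J. p ^ b i) / (1 - p))"
  proof -
    have "(\<Sum>i\<in>J. p ^ b i) / (1 - p) \<le> (1 / (1 - p)) / (1 - p)"
      using sumb p by (intro divide_right_mono) auto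
    thus ?thesis by (simp add: power2_eq_square)
  qed
  also have "\<dots> = (\<Prod>i\<in>J. exp (- (p ^ b i) / (1 - p)))"
  proof -
    have "- (\<Sum>i\<in>J. p ^ b i) / (1 - p) = (\<Sum>i\<in>J. - (p ^ b i) / (1 - p))"
      by (simp add: sum_divide_distrib sum_negf)
    thus ?thesis by (simp only: exp_sum[OF J])
  qed
  also have "\<dots> \<le> (\<Prod>i\<in>J. 1 - p ^ b i)"
  proof (intro prod_mono conjI)
    fix i assume i: "i \<in> J"
    show "0 \<le> exp (- (p ^ b i) / (1 - p))" by simp
    have "p ^ b i \<le> p ^ 1" using p b1[OF i] by (intro power_decreasing) auto
    thus "exp (- (p ^ b i) / (1 - p)) \<le> 1 - p ^ b i" using p by (intro factor_lb) auto
  qed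
  finally show ?thesis .
qed



definition Jw :: "nat \<Rightarrow> nat \<Rightarrow> nat set" where "Jw m k = {(k-1)*m+1..k*m}"
definition bw :: "nat \<Rightarrow> nat \<Rightarrow> nat \<Rightarrow> nat" where "bw m k i = k*m - i + 1"
definition Aw :: "nat \<Rightarrow> nat \<Rightarrow> (nat \<Rightarrow> nat) \<Rightarrow> bool" where
  "Aw m k z \<longleftrightarrow> (\<forall>i\<in>Jw m k. z i \<le> bw m k i)"
definition Bw :: "nat \<Rightarrow> (nat \<Rightarrow> nat) \<Rightarrow> bool" where
  "Bw m z \<longleftrightarrow> (\<exists>i\<in>{1..m^2}. m < z i)"
definition PA :: "real \<Rightarrow> nat \<Rightarrow> nat \<Rightarrow> real" where
  "PA p m k = (\<Prod>i\<in>Jw m k. 1 - p ^ bw m k i)"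

lemma key:
  assumes "\<not> Bw m z" "\<not> Bw m z'" "k \<in> {1..m}" "Aw m k z" "Aw m k z'"
  shows "first_joint_block (mallows_map z) (mallows_map z') \<le> of_nat (m^2)"
proof -
  have k1: "1 \<le> k" "k \<le> m" using assms(3) by auto
  have e1: "(k-1)*m + m = k*m" using k1 by (cases k) auto
  have e2: "k*m \<le> m^2" using k1 by (simp add: power2_eq_square)
  have e3: "1 \<le> k*m" using k1 by (simp add: Suc_le_eq)
  have g: "good (k*m) w" if nB: "\<not> Bw m w" and A: "Aw m k w" for w
    unfolding good_def
  proof
    fix i assume i: "i \<in> {1..k*m}"
    show "w i \<le> k*m - i + 1"
    proof (cases "i \<le> (k-1)*m")
      case True
      hence "i \<le> m^2" using e1 e2 by linarith
      hence "w i \<le> m" using nB i unfolding Bw_def by (auto simp: not_less)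
      thus ?thesis using True e1 by linarith
    next
      case False
      hence "i \<in> Jw m k" using i unfolding Jw_def by auto
      thus ?thesis using A unfolding Aw_def bw_def by auto
    qed
  qed
  have "first_joint_block (mallows_map z) (mallows_map z') \<le> of_nat (k*m)"
    by (rule fjb_le[OF g[OF assms(1,4)] g[OF assms(2,5)] e3])
  also have "\<dots> \<le> of_nat (m^2)" by (rule of_nat_mono[OF e2])
  finally show ?thesis .
qed

definition Gf :: "nat \<Rightarrow> (nat \<Rightarrow> nat) \<times> (nat \<Rightarrow> nat) \<Rightarrow> ennreal" where
  "Gf m \<omega> = indicator {\<omega>. Bw m (fst \<omega>)} \<omega> + indicator {\<omega>. Bw m (snd \<omega>)} \<omega>
     + (\<Prod>k\<in>{1..m}. if Aw m k (fst \<omega>) \<and> Aw m k (snd \<omega>) then 0 else 1)"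

definition wt :: "nat \<Rightarrow> nat" where "wt m = Suc m ^ 4 - m ^ 4"

definition gfun :: "(nat \<Rightarrow> nat) \<times> (nat \<Rightarrow> nat) \<Rightarrow> ennreal" where
  "gfun \<omega> = (\<Sum>m. of_nat (wt m) * Gf m \<omega>)"

lemma G_ge:
  assumes H: "of_nat (m^2) < first_joint_block (mallows_map (fst \<omega>)) (mallows_map (snd \<omega>))"
  shows "1 \<le> Gf m \<omega>"
proof (cases "Bw m (fst \<omega>) \<or> Bw m (snd \<omega>)")
  case True thus ?thesis by (auto simp: Gf_def indicator_def)
next
  case False
  have "\<forall>k\<in>{1..m}. \<not> (Aw m k (fst \<omega>) \<and> Aw m k (snd \<omega>))"
  proof (intro ballI notI)
    fix k assume k: "k \<in> {1..m}" and A: "Aw m k (fst \<omega>) \<and> Aw m k (snd \<omega>)"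
    have "first_joint_block (mallows_map (fst \<omega>)) (mallows_map (snd \<omega>)) \<le> of_nat (m^2)"
      using key[of m "fst \<omega>" "snd \<omega>" k] False k A by blast
    thus False using leD H by blast
  qed
  hence "(\<Prod>k\<in>{1..m}. if Aw m k (fst \<omega>) \<and> Aw m k (snd \<omega>) then 0 else 1) = (1::ennreal)"
    by (intro prod.neutral) auto
  thus ?thesis by (simp add: Gf_def)
qed

lemma wt_sum: "(\<Sum>m<N. wt m) = N^4"
proof (induction N)
  case 0 thus ?case by simp
next
  case (Suc N)
  have "N^4 \<le> Suc N ^ 4" by (rule power_mono) auto
  thus ?case using Suc by (simp add: wt_def)
qed

lemma lowN:
  assumes "\<forall>m<N. of_nat (m^2) < first_joint_block (mallows_map (fst \<omega>)) (mallows_map (snd \<omega>))"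
  shows "of_nat (N^4) \<le> gfun \<omega>"
proof -
  have "(of_nat (N^4) :: ennreal) = (\<Sum>m<N. of_nat (wt m))" by (simp add: wt_sum[symmetric])
  also have "\<dots> \<le> (\<Sum>m<N. of_nat (wt m) * Gf m \<omega>)"
  proof (intro sum_mono)
    fix m assume "m \<in> {..<N}"
    hence "1 \<le> Gf m \<omega>" using assms G_ge by auto
    hence "of_nat (wt m) * 1 \<le> of_nat (wt m) * Gf m \<omega>" by (intro mult_left_mono) auto
    thus "of_nat (wt m) \<le> of_nat (wt m) * Gf m \<omega>" by simp
  qed
  also have "\<dots> \<le> gfun \<omega>" unfolding gfun_def by (intro sum_le_suminf) auto
  finally show ?thesis .
qed

lemma T2_le: "first_joint_block (mallows_map (fst \<omega>)) (mallows_map (snd \<omega>)) ^ 2 \<le> gfun \<omega>"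
proof -
  let ?T = "first_joint_block (mallows_map (fst \<omega>)) (mallows_map (snd \<omega>))"
  have "?T = \<top> \<or> (\<exists>t. ?T = of_nat t)" unfolding first_joint_block_def by auto
  thus ?thesis
  proof
    assume T: "?T = \<top>"
    have "\<forall>N. of_nat (N^4) \<le> gfun \<omega>"
    proof
      fix N show "of_nat (N^4) \<le> gfun \<omega>" by (rule lowN) (unfold T, intro allI impI, rule of_nat_less_top)
    qed
    have "gfun \<omega> = \<top>"
    proof (rule ccontr)
      assume "gfun \<omega> \<noteq> \<top>"
      then obtain n where n: "gfun \<omega> < of_nat n" using ennreal_Ex_less_of_nat top.not_eq_extremum by blast
      have "n \<le> n^4"
      proof (cases "n = 0")
        case False
        hence "n^1 \<le> n^4" by (intro power_increasing) auto
        thus ?thesis by simp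
      qed simp
      hence "(of_nat n :: ennreal) \<le> of_nat (n^4)" by (rule of_nat_mono)
      hence "of_nat n \<le> gfun \<omega>" using \<open>\<forall>N. _\<close> order_trans by blast
      thus False using n by simp
    qed
    thus ?thesis by simp
  next
    assume "\<exists>t. ?T = of_nat t"
    then obtain t where t: "?T = of_nat t" by blast
    define N where "N = (LEAST N. t \<le> N^2)"
    have ex: "t \<le> t^2" by (simp add: power2_eq_square)
    have N1: "t \<le> N^2" unfolding N_def by (rule LeastI[of _ t]) (rule ex)
    have "\<forall>m<N. of_nat (m^2) < ?T"
    proof (intro allI impI)
      fix m assume "m < N"
      hence "\<not> t \<le> m^2" unfolding N_def by (rule not_less_Least)
      hence "m^2 < t" by simp
      hence "(of_nat (m^2) :: ennreal) < of_nat t" by (simp only: of_nat_less_iff)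
      thus "of_nat (m^2) < ?T" using t by simp
    qed
    hence "of_nat (N^4) \<le> gfun \<omega>" by (rule lowN)
    moreover have "t^2 \<le> N^4"
    proof -
      have "t^2 \<le> (N^2)^2" using N1 by (rule power_mono) simp
      thus ?thesis by (simp add: power_mult[symmetric])
    qed
    ultimately show ?thesis using t
      by (metis (mono_tags) of_nat_le_iff of_nat_power order_trans)
  qed
qed


lemma sp_S: "space (mallows_seq_space p) = UNIV"
  by (simp add: mallows_seq_space_def space_S)

lemma Gf_meas: "Gf m \<in> borel_measurable (mallows_seq_space p \<Otimes>\<^sub>M mallows_seq_space p)"
  unfolding Gf_def Bw_def Aw_def Jw_def mallows_seq_space_def by measurable

lemma C_meas: "(\<lambda>\<omega>. \<Prod>k\<in>{1..m}. if Aw m k (fst \<omega>) \<and> Aw m k (snd \<omega>) then 0 else (1::ennreal))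
   \<in> borel_measurable (mallows_seq_space p \<Otimes>\<^sub>M mallows_seq_space p)"
  unfolding Aw_def Jw_def mallows_seq_space_def by measurable

lemma Bs: "{z. Bw m z} \<in> sets (mallows_seq_space p)"
  unfolding Bw_def mallows_seq_space_def by (intro S_Collect) measurable

lemma int_B1:
  "(\<integral>\<^sup>+\<omega>. indicator {\<omega>. Bw m (fst \<omega>)} \<omega> \<partial>(mallows_seq_space p \<Otimes>\<^sub>M mallows_seq_space p))
   = emeasure (mallows_seq_space p) {z. Bw m z}"
proof -
  interpret S: prob_space "mallows_seq_space p" by (rule prob_S)
  have set: "{\<omega>. Bw m (fst \<omega>)} = {z. Bw m z} \<times> UNIV" by auto
  have Us: "UNIV \<in> sets (mallows_seq_space p)" using sets.top[of "mallows_seq_space p"] by (simp add: sp_S)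
  have "(\<integral>\<^sup>+\<omega>. indicator {\<omega>. Bw m (fst \<omega>)} \<omega> \<partial>(mallows_seq_space p \<Otimes>\<^sub>M mallows_seq_space p))
     = emeasure (mallows_seq_space p \<Otimes>\<^sub>M mallows_seq_space p) ({z. Bw m z} \<times> UNIV)"
    unfolding set by (rule nn_integral_indicator[OF pair_measureI[OF Bs Us]])
  also have "\<dots> = emeasure (mallows_seq_space p) {z. Bw m z} * emeasure (mallows_seq_space p) UNIV"
    by (rule S.emeasure_pair_measure_Times[OF Bs Us])
  also have "emeasure (mallows_seq_space p) UNIV = 1" using S.emeasure_space_1 by (simp add: sp_S)
  finally show ?thesis by simp
qed

lemma int_B2:
  "(\<integral>\<^sup>+\<omega>. indicator {\<omega>. Bw m (snd \<omega>)} \<omega> \<partial>(mallows_seq_space p \<Otimes>\<^sub>M mallows_seq_space p))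
   = emeasure (mallows_seq_space p) {z. Bw m z}"
proof -
  interpret S: prob_space "mallows_seq_space p" by (rule prob_S)
  have set: "{\<omega>. Bw m (snd \<omega>)} = UNIV \<times> {z. Bw m z}" by auto
  have Us: "UNIV \<in> sets (mallows_seq_space p)" using sets.top[of "mallows_seq_space p"] by (simp add: sp_S)
  have "(\<integral>\<^sup>+\<omega>. indicator {\<omega>. Bw m (snd \<omega>)} \<omega> \<partial>(mallows_seq_space p \<Otimes>\<^sub>M mallows_seq_space p))
     = emeasure (mallows_seq_space p \<Otimes>\<^sub>M mallows_seq_space p) (UNIV \<times> {z. Bw m z})"
    unfolding set by (rule nn_integral_indicator[OF pair_measureI[OF Us Bs]])
  also have "\<dots> = emeasure (mallows_seq_space p) UNIV * emeasure (mallows_seq_space p) {z. Bw m z}"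
    by (rule S.emeasure_pair_measure_Times[OF Us Bs])
  also have "emeasure (mallows_seq_space p) UNIV = 1" using S.emeasure_space_1 by (simp add: sp_S)
  finally show ?thesis by simp
qed

lemma Jw_disj: "disjoint_family_on (Jw m) (K :: nat set)"
  unfolding disjoint_family_on_def
proof (intro ballI impI)
  fix k k' :: nat assume "k \<noteq> k'"
  show "Jw m k \<inter> Jw m k' = {}"
  proof (rule ccontr)
    assume "Jw m k \<inter> Jw m k' \<noteq> {}"
    then obtain i where i: "i \<in> Jw m k" "i \<in> Jw m k'" by blast
    have H: "\<And>a b. a < b \<Longrightarrow> i \<in> Jw m a \<Longrightarrow> i \<in> Jw m b \<Longrightarrow> False"
    proof -
      fix a b assume ab: "a < b" and ia: "i \<in> Jw m a" and ib: "i \<in> Jw m b"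
      have f: "a * m \<le> (b - 1) * m" using ab by (intro mult_le_mono1) simp
      have ia': "i \<le> a*m" using ia unfolding Jw_def by simp
      have ib': "(b-1)*m + 1 \<le> i" using ib unfolding Jw_def by simp
      show False using ia' ib' f by linarith
    qed
    show False
    proof (cases "k < k'")
      case True thus False using H i by blast
    next
      case False hence "k' < k" using \<open>k \<noteq> k'\<close> by simp
      thus False using H i by blast
    qed
  qed
qed

lemma PA_bounds:
  assumes p: "0 < p" "p < 1"
  shows "exp (- 1 / (1 - p)^2) \<le> PA p m k" "PA p m k \<le> 1"
proof -
  have inj: "inj_on (bw m k) (Jw m k)"
    by (rule inj_onI) (auto simp: bw_def Jw_def)
  show "exp (- 1 / (1 - p)^2) \<le> PA p m k" unfolding PA_def
    by (rule prod_lb[OF p _ inj]) (auto simp: Jw_def bw_def)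
  show "PA p m k \<le> 1" unfolding PA_def
    using p by (intro prod_le_1) (auto simp: power_le_one)
qed

lemma int_C:
  assumes p: "0 < p" "p < 1"
  shows "(\<integral>\<^sup>+\<omega>. (\<Prod>k\<in>{1..m}. if Aw m k (fst \<omega>) \<and> Aw m k (snd \<omega>) then 0 else (1::ennreal))
            \<partial>(mallows_seq_space p \<Otimes>\<^sub>M mallows_seq_space p))
       = (\<Prod>k\<in>{1..m}. ennreal ((1 - PA p m k) * PA p m k + (1 - PA p m k)))"
proof -
  interpret S: prob_space "mallows_seq_space p" by (rule prob_S)
  have finJ: "\<And>k. k \<in> {1..m} \<Longrightarrow> finite (Jw m k)" by (simp add: Jw_def)
  have "(\<integral>\<^sup>+\<omega>. (\<Prod>k\<in>{1..m}. if Aw m k (fst \<omega>) \<and> Aw m k (snd \<omega>) then 0 else (1::ennreal))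
            \<partial>(mallows_seq_space p \<Otimes>\<^sub>M mallows_seq_space p))
     = (\<integral>\<^sup>+z. \<integral>\<^sup>+z'. (\<Prod>k\<in>{1..m}. if Aw m k z \<and> Aw m k z' then 0 else (1::ennreal))
            \<partial>mallows_seq_space p \<partial>mallows_seq_space p)"
    using S.nn_integral_fst[OF C_meas[of m p]] by simp
  also have "\<dots> = (\<integral>\<^sup>+z. (\<Prod>k\<in>{1..m}. if \<forall>i\<in>Jw m k. z i \<le> bw m k i then ennreal (1 - PA p m k) else 1)
            \<partial>mallows_seq_space p)"
  proof (rule nn_integral_cong)
    fix z
    have "(\<integral>\<^sup>+z'. (\<Prod>k\<in>{1..m}. if Aw m k z \<and> Aw m k z' then 0 else (1::ennreal)) \<partial>mallows_seq_space p)
       = (\<integral>\<^sup>+z'. (\<Prod>k\<in>{1..m}. if \<forall>i\<in>Jw m k. z' i \<le> bw m k i then ennreal (if Aw m k z then 0 else 1) else 1)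
            \<partial>mallows_seq_space p)"
      by (intro nn_integral_cong prod.cong refl) (auto simp: Aw_def)
    also have "\<dots> = (\<Prod>k\<in>{1..m}. ennreal ((if Aw m k z then 0 else 1) * PA p m k + (1 - PA p m k)))"
    proof -
      have a0: "\<And>k. k \<in> {1..m} \<Longrightarrow> (0::real) \<le> (if Aw m k z then 0 else 1)" by simp
      show ?thesis unfolding PA_def by (rule block_box_prod[OF p finite_atLeastAtMost Jw_disj finJ a0])
    qed
    also have "\<dots> = (\<Prod>k\<in>{1..m}. if \<forall>i\<in>Jw m k. z i \<le> bw m k i then ennreal (1 - PA p m k) else 1)"
      by (intro prod.cong refl) (auto simp: Aw_def)
    finally show "(\<integral>\<^sup>+z'. (\<Prod>k\<in>{1..m}. if Aw m k z \<and> Aw m k z' then 0 else (1::ennreal)) \<partial>mallows_seq_space p)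
       = (\<Prod>k\<in>{1..m}. if \<forall>i\<in>Jw m k. z i \<le> bw m k i then ennreal (1 - PA p m k) else 1)" .
  qed
  also have "\<dots> = (\<Prod>k\<in>{1..m}. ennreal ((1 - PA p m k) * PA p m k + (1 - PA p m k)))"
  proof -
    have a1: "\<And>k. k \<in> {1..m} \<Longrightarrow> 0 \<le> 1 - PA p m k" using PA_bounds(2)[OF p] by simp
    show ?thesis unfolding PA_def
      by (rule block_box_prod[OF p finite_atLeastAtMost Jw_disj finJ a1[unfolded PA_def]])
  qed
  finally show ?thesis .
qed



lemma int_G:
  assumes p: "0 < p" "p < 1"
  shows "(\<integral>\<^sup>+\<omega>. Gf m \<omega> \<partial>(mallows_seq_space p \<Otimes>\<^sub>M mallows_seq_space p))
    = emeasure (mallows_seq_space p) {z. Bw m z} + emeasure (mallows_seq_space p) {z. Bw m z}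
      + (\<Prod>k\<in>{1..m}. ennreal ((1 - PA p m k) * PA p m k + (1 - PA p m k)))"
proof -
  have m1: "(\<lambda>\<omega>. indicator {\<omega>. Bw m (fst \<omega>)} \<omega> :: ennreal) \<in> borel_measurable (mallows_seq_space p \<Otimes>\<^sub>M mallows_seq_space p)"
    unfolding Bw_def mallows_seq_space_def by measurable
  have m2: "(\<lambda>\<omega>. indicator {\<omega>. Bw m (snd \<omega>)} \<omega> :: ennreal) \<in> borel_measurable (mallows_seq_space p \<Otimes>\<^sub>M mallows_seq_space p)"
    unfolding Bw_def mallows_seq_space_def by measurable
  let ?SS = "mallows_seq_space p \<Otimes>\<^sub>M mallows_seq_space p"
  have "(\<integral>\<^sup>+\<omega>. Gf m \<omega> \<partial>?SS) = (\<integral>\<^sup>+\<omega>. indicator {\<omega>. Bw m (fst \<omega>)} \<omega> + indicator {\<omega>. Bw m (snd \<omega>)} \<omega> \<partial>?SS)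
     + (\<integral>\<^sup>+\<omega>. (\<Prod>k\<in>{1..m}. if Aw m k (fst \<omega>) \<and> Aw m k (snd \<omega>) then 0 else (1::ennreal)) \<partial>?SS)"
    unfolding Gf_def by (intro nn_integral_add borel_measurable_add m1 m2 C_meas)
  also have "(\<integral>\<^sup>+\<omega>. indicator {\<omega>. Bw m (fst \<omega>)} \<omega> + indicator {\<omega>. Bw m (snd \<omega>)} \<omega> \<partial>?SS)
     = (\<integral>\<^sup>+\<omega>. indicator {\<omega>. Bw m (fst \<omega>)} \<omega> \<partial>?SS) + (\<integral>\<^sup>+\<omega>. indicator {\<omega>. Bw m (snd \<omega>)} \<omega> \<partial>?SS)"
    by (rule nn_integral_add[OF m1 m2])
  finally show ?thesis by (simp only: int_B1 int_B2 int_C[OF p])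
qed

theorem main_bound:
  assumes p: "0 < p" "p < 1"
  shows "(\<integral>\<^sup>+\<omega>. (first_joint_block (mallows_map (fst \<omega>)) (mallows_map (snd \<omega>))) ^ 2
            \<partial>(mallows_seq_space p \<Otimes>\<^sub>M mallows_seq_space p)) < \<infinity>"
proof -
  define c where "c = exp (- 1 / (1 - p)^2)"
  define r where "r = 1 - c^2"
  have c0: "0 < c" unfolding c_def by simp
  have c1: "c \<le> 1" unfolding c_def using p by simp
  have r0: "0 \<le> r" unfolding r_def using c0 c1 by (simp add: power_le_one)
  have r1: "r < 1" unfolding r_def using c0 by simp
  define F where "F m = real (Suc m) ^ 4 * (2 * real (Suc m) ^ 2 * p ^ m + r ^ m)" for m
  have F0: "0 \<le> F m" for m unfolding F_def using p r0 by simp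
  have Fs: "summable F"
  proof -
    have "F = (\<lambda>m. 2 * (real (Suc m) ^ 6 * p ^ m) + real (Suc m) ^ 4 * r ^ m)"
    proof
      fix m
      have "real (Suc m) ^ 6 = real (Suc m) ^ 4 * real (Suc m) ^ 2" by (simp flip: power_add)
      thus "F m = 2 * (real (Suc m) ^ 6 * p ^ m) + real (Suc m) ^ 4 * r ^ m"
        unfolding F_def by (simp add: distrib_left mult.assoc mult.left_commute)
    qed
    moreover have "summable (\<lambda>m. 2 * (real (Suc m) ^ 6 * p ^ m) + real (Suc m) ^ 4 * r ^ m)"
      using poly_geo[of p 6] poly_geo[of r 4] p r0 r1
      by (intro summable_add summable_mult) auto
    ultimately show ?thesis by simp
  qed
  have trm: "of_nat (wt m) * (\<integral>\<^sup>+\<omega>. Gf m \<omega> \<partial>(mallows_seq_space p \<Otimes>\<^sub>M mallows_seq_space p)) \<le> ennreal (F m)" for m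
  proof -
    have eB: "emeasure (mallows_seq_space p) {z. Bw m z} \<le> ennreal (real (m^2) * p^m)"
    proof -
      have em: "ennreal (real (m^2) * p^m) = of_nat (m^2) * ennreal (p^m)"
        using p by (simp add: ennreal_mult ennreal_of_nat_eq_real_of_nat)
      show ?thesis unfolding em Bw_def by (rule B_measure[OF p])
    qed
    have eC: "(\<Prod>k\<in>{1..m}. ennreal ((1 - PA p m k) * PA p m k + (1 - PA p m k))) \<le> ennreal (r ^ m)"
    proof -
      have fa: "\<And>k. 0 \<le> (1 - PA p m k) * PA p m k + (1 - PA p m k) \<and>
                 (1 - PA p m k) * PA p m k + (1 - PA p m k) \<le> r"
      proof -
        fix k
        have lb: "c \<le> PA p m k" using PA_bounds(1)[OF p] unfolding c_def .
        have ub: "PA p m k \<le> 1" using PA_bounds(2)[OF p] .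
        have e: "(1 - PA p m k) * PA p m k + (1 - PA p m k) = 1 - (PA p m k)^2"
          by (simp add: algebra_simps power2_eq_square)
        have "c^2 \<le> (PA p m k)^2" using lb c0 by (intro power_mono) auto
        moreover have "(PA p m k)^2 \<le> 1" using ub lb c0 by (simp add: power_le_one)
        ultimately show "0 \<le> (1 - PA p m k) * PA p m k + (1 - PA p m k) \<and>
                 (1 - PA p m k) * PA p m k + (1 - PA p m k) \<le> r"
          unfolding e r_def by simp
      qed
      have "(\<Prod>k\<in>{1..m}. ennreal ((1 - PA p m k) * PA p m k + (1 - PA p m k)))
          = ennreal (\<Prod>k\<in>{1..m}. (1 - PA p m k) * PA p m k + (1 - PA p m k))"
        using fa by (intro prod_ennreal) blast
      also have "\<dots> \<le> ennreal (\<Prod>k\<in>{1..m}. r)"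
        using fa by (intro ennreal_leI prod_mono) blast
      also have "(\<Prod>k\<in>{1..m}. r) = r ^ m" by simp
      finally show ?thesis .
    qed
    have "(\<integral>\<^sup>+\<omega>. Gf m \<omega> \<partial>(mallows_seq_space p \<Otimes>\<^sub>M mallows_seq_space p))
        \<le> ennreal (real (m^2) * p^m) + ennreal (real (m^2) * p^m) + ennreal (r ^ m)"
      unfolding int_G[OF p] by (intro add_mono eB eC)
    also have "\<dots> = ennreal (real (m^2) * p^m + real (m^2) * p^m + r^m)"
    proof -
      have a0: "0 \<le> real (m^2) * p^m" using p by simp
      have e1: "ennreal (real (m^2) * p^m + real (m^2) * p^m) = ennreal (real (m^2) * p^m) + ennreal (real (m^2) * p^m)"
        by (rule ennreal_plus[OF a0 a0])
      have e2: "ennreal (real (m^2) * p^m + real (m^2) * p^m + r^m) = ennreal (real (m^2) * p^m + real (m^2) * p^m) + ennreal (r^m)"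
        by (rule ennreal_plus) (use a0 r0 in \<open>auto simp: mult.commute\<close>)
      show ?thesis by (simp only: e1 e2)
    qed
    also have "\<dots> = ennreal (2 * real (m^2) * p^m + r^m)"
      by (intro arg_cong[where f=ennreal]) (simp add: algebra_simps)
    finally have iG: "(\<integral>\<^sup>+\<omega>. Gf m \<omega> \<partial>(mallows_seq_space p \<Otimes>\<^sub>M mallows_seq_space p))
        \<le> ennreal (2 * real (m^2) * p^m + r^m)" .
    have "of_nat (wt m) * (\<integral>\<^sup>+\<omega>. Gf m \<omega> \<partial>(mallows_seq_space p \<Otimes>\<^sub>M mallows_seq_space p))
        \<le> ennreal (real (wt m)) * ennreal (2 * real (m^2) * p^m + r^m)"
      unfolding ennreal_of_nat_eq_real_of_nat by (intro mult_left_mono iG) simp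
    also have "\<dots> = ennreal (real (wt m) * (2 * real (m^2) * p^m + r^m))"
      by (rule ennreal_mult[symmetric]) (use p r0 in auto)
    also have "\<dots> \<le> ennreal (F m)"
    proof (intro ennreal_leI)
      have "wt m \<le> Suc m ^ 4" unfolding wt_def by simp
      hence w: "real (wt m) \<le> real (Suc m) ^ 4" by (simp only: of_nat_power[symmetric] of_nat_le_iff)
      have "m^2 \<le> Suc m ^ 2" by (rule power_mono) simp_all
      hence q: "real (m^2) \<le> real (Suc m) ^ 2" by (simp only: of_nat_power[symmetric] of_nat_le_iff)
      have "2 * real (m^2) * p^m + r^m \<le> 2 * real (Suc m) ^ 2 * p^m + r^m"
        using q p by (intro add_right_mono mult_right_mono) auto
      thus "real (wt m) * (2 * real (m^2) * p^m + r^m) \<le> F m"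
        unfolding F_def using w p r0 by (intro mult_mono) auto
    qed
    finally show ?thesis .
  qed
  have "(\<integral>\<^sup>+\<omega>. (first_joint_block (mallows_map (fst \<omega>)) (mallows_map (snd \<omega>))) ^ 2
            \<partial>(mallows_seq_space p \<Otimes>\<^sub>M mallows_seq_space p))
      \<le> (\<integral>\<^sup>+\<omega>. gfun \<omega> \<partial>(mallows_seq_space p \<Otimes>\<^sub>M mallows_seq_space p))"
    by (intro nn_integral_mono T2_le)
  also have "\<dots> = (\<Sum>m. \<integral>\<^sup>+\<omega>. of_nat (wt m) * Gf m \<omega> \<partial>(mallows_seq_space p \<Otimes>\<^sub>M mallows_seq_space p))"
    unfolding gfun_def using Gf_meas by (intro nn_integral_suminf) measurable
  also have "\<dots> = (\<Sum>m. of_nat (wt m) * \<integral>\<^sup>+\<omega>. Gf m \<omega> \<partial>(mallows_seq_space p \<Otimes>\<^sub>M mallows_seq_space p))"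
    using Gf_meas by (simp add: nn_integral_cmult)
  also have "\<dots> \<le> (\<Sum>m. ennreal (F m))"
    by (intro suminf_le trm) auto
  also have "\<dots> = ennreal (\<Sum>m. F m)" using F0 Fs by (rule suminf_ennreal2)
  also have "\<dots> < \<infinity>" by simp
  finally show ?thesis .
qed


theorem lemma4p3:
  fixes q :: real
  assumes "q > 1"
  shows "(\<integral>\<^sup>+ \<omega>. (first_joint_block (mallows_map (fst \<omega>)) (mallows_map (snd \<omega>))) ^ 2
            \<partial>(mallows_seq_space (1 / q) \<Otimes>\<^sub>M mallows_seq_space (1 / q))) < \<infinity>"
proof (rule main_bound)
  show "0 < 1 / q" using assms by simp
  show "1 / q < 1" using assms by simp
qed

end
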